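(* Let $\pi_\bullet\in\mathrm{Dr}(k,n)$. For every $I\in\binom{[n]}k$, $$\pi_I=-\min_{\mathbf y\in\mathrm{Vert}(B(\pi_\bullet))}\sum_{i\in I}-\tilde y_i,$$ where for a vertex $\mathbf y$ of $B(\pi_\bullet)$, $\tilde{\mathbf y}=(\tilde y_1,\dots,\tilde y_n)\in\mathbb R^n$ is its lift.
   Context: $\mathrm{Dr}(k,n)$ is the set of $\pi_\bullet\in\mathbb R^{\binom{[n]}k}$ such that for every $S\in\binom{[n]}{k-2}$ and $a<b<c<d$ in $[n]\setminus S$, $\min(\pi_{Sab}+\pi_{Scd},\pi_{Sac}+\pi_{Sbd},\pi_{Sad}+\pi_{Sbc})$ is attained at least twice. For $\mathbf x\in\mathbb R^n$, $\pi^{\mathbf x}_I=\pi_I-\sum_{i\in I}x_i$, and $M(\pi^{\mathbf x}_\bullet)=\{I:\pi^{\mathbf x}_I=\min_J\pi^{\mathbf x}_J\}$ (a matroid). The tropical linear space $L(\pi_\bullet)\subset\mathbb R^n/\mathbf 1$ is the set of $\mathbf x$ such that for each $\tau\in\binom{[n]}{k+1}$, $\min_{i\in\tau}(\pi_{\tau\setminus i}+x_i)$ is attained at least twice. Its matroid complex structure is the stratification into faces on which $M(\pi^{\mathbf x}_\bullet)$ is constant; $B(\pi_\bullet)$ is the subcomplex of bounded faces and $\mathrm{Vert}(B(\pi_\bullet))$ its vertices. For $\mathbf y\in L(\pi_\bullet)$ its lift $\tilde{\mathbf y}\in\mathbb R^n$ is the representative with $\min_I\pi^{\tilde{\mathbf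 y}}_I=0$. *)

theory Defs
  imports Complex_Main
begin

definition binom :: "nat \<Rightarrow> nat \<Rightarrow> nat set set" where
  "binom n k = {I. I \<subseteq> {1..n} \<and> card I = k}"

definition min_twice :: "'a set \<Rightarrow> ('a \<Rightarrow> real) \<Rightarrow> bool" where
  "min_twice A f \<longleftrightarrow>
     (\<exists>i\<in>A. \<exists>j\<in>A. i \<noteq> j \<and> (\<forall>l\<in>A. f i \<le> f l) \<and> f j = f i)"

text \<open>Dressian Dr(k,n); a point is a function on k-subsets (values elsewhere irrelevant).\<close>
definition dressian :: "nat \<Rightarrow> nat \<Rightarrow> (nat set \<Rightarrow> real) set" where
  "dressian k n = {\<pi>. \<forall>S a b c d.
      S \<subseteq> {1..n} \<and> card S + 2 = k \<and> a < b \<and> b < c \<and> c < d \<and>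
      {a, b, c, d} \<subseteq> {1..n} - S \<longrightarrow>
      min_twice {1::nat, 2, 3}
        (\<lambda>j. if j = 1 then \<pi> (S \<union> {a, b}) + \<pi> (S \<union> {c, d})
             else if j = 2 then \<pi> (S \<union> {a, c}) + \<pi> (S \<union> {b, d})
             else \<pi> (S \<union> {a, d}) + \<pi> (S \<union> {b, c}))}"

definition twist :: "(nat set \<Rightarrow> real) \<Rightarrow> (nat \<Rightarrow> real) \<Rightarrow> nat set \<Rightarrow> real" where
  "twist \<pi> x I = \<pi> I - (\<Sum>i\<in>I. x i)"

definition min_matroid :: "nat \<Rightarrow> nat \<Rightarrow> (nat set \<Rightarrow> real) \<Rightarrow> (nat \<Rightarrow> real) \<Rightarrow> nat set set" where
  "min_matroid n k \<pi> x =
     {I \<in> binom n k. \<forall>J \<in> binom n k. twist \<pi> x I \<le> twist \<pi> x J}"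

text \<open>Tropical linear space L(pi), as a set of representatives in R^n
  (only the coordinates 1..n matter; the condition is invariant under adding multiples of 1).\<close>
definition trop_lin_space :: "nat \<Rightarrow> nat \<Rightarrow> (nat set \<Rightarrow> real) \<Rightarrow> (nat \<Rightarrow> real) set" where
  "trop_lin_space n k \<pi> =
     {x. \<forall>\<tau> \<in> binom n (k + 1). min_twice \<tau> (\<lambda>i. \<pi> (\<tau> - {i}) + x i)}"

definition proj_eq :: "nat \<Rightarrow> (nat \<Rightarrow> real) \<Rightarrow> (nat \<Rightarrow> real) \<Rightarrow> bool" where
  "proj_eq n x y \<longleftrightarrow> (\<exists>c. \<forall>i\<in>{1..n}. x i = y i + c)"

text \<open>The faces of the matroid complex structure of L(pi) are the strata
  {x in L(pi). M(pi^x) = M}. A vertex of B(pi) is a 0-dimensional face, i.e. a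
  point y of L(pi) whose stratum is the single point y of R^n/1.\<close>
definition is_vertex :: "nat \<Rightarrow> nat \<Rightarrow> (nat set \<Rightarrow> real) \<Rightarrow> (nat \<Rightarrow> real) \<Rightarrow> bool" where
  "is_vertex n k \<pi> y \<longleftrightarrow> y \<in> trop_lin_space n k \<pi> \<and>
     (\<forall>y' \<in> trop_lin_space n k \<pi>.
        min_matroid n k \<pi> y' = min_matroid n k \<pi> y \<longrightarrow> proj_eq n y' y)"

definition is_lift :: "nat \<Rightarrow> nat \<Rightarrow> (nat set \<Rightarrow> real) \<Rightarrow> (nat \<Rightarrow> real) \<Rightarrow> bool" where
  "is_lift n k \<pi> y \<longleftrightarrow> (\<forall>i. i \<notin> {1..n} \<longrightarrow> y i = 0) \<and>
     Min (twist \<pi> y ` binom n k) = 0"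

definition vertex_lifts :: "nat \<Rightarrow> nat \<Rightarrow> (nat set \<Rightarrow> real) \<Rightarrow> (nat \<Rightarrow> real) set" where
  "vertex_lifts n k \<pi> = {y. is_vertex n k \<pi> y \<and> is_lift n k \<pi> y}"

end

theory Submission
  imports Defs
begin

lemma binom_finite: "finite (binom n k)"
  unfolding binom_def by (rule finite_subset[of _ "Pow {1..n}"]) auto

lemma binomD:
  assumes "B \<in> binom n k"
  shows "B \<subseteq> {1..n}" "card B = k" "finite B"
  using assms unfolding binom_def by (auto intro: finite_subset)

lemma binom_ex:
  assumes B: "B \<in> binom n k" and a: "a \<in> B" and b: "b \<in> {1..n}" "b \<notin> B"
  shows "insert b (B - {a}) \<in> binom n k"
proof -
  have f: "finite B" and c: "card B = k" and s: "B \<subseteq> {1..n}" using binomD[OF B] by auto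
  have "card B > 0" using f a card_gt_0_iff by blast
  then have "card (insert b (B - {a})) = k"
    using f a b c by (simp add: card_insert_if)
  then show ?thesis using s a b unfolding binom_def by auto
qed

lemma sum_ex:
  fixes x :: "nat \<Rightarrow> real"
  shows "finite B \<Longrightarrow> a \<in> B \<Longrightarrow> b \<notin> B \<Longrightarrow> sum x (insert b (B - {a})) = sum x B - x a + x b"
  by (simp add: sum.insert sum_diff1)

lemma twist_ex:
  "finite B \<Longrightarrow> a \<in> B \<Longrightarrow> b \<notin> B \<Longrightarrow>
    twist \<pi> x (insert b (B - {a})) = \<pi> (insert b (B - {a})) - sum x B + x a - x b"
  unfolding twist_def by (subst sum_ex) auto

lemma fin_argmin:
  fixes f :: "'a \<Rightarrow> real"
  assumes "finite A" "A \<noteq> {}"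
  shows "\<exists>a\<in>A. \<forall>b\<in>A. f a \<le> f b"
proof -
  have "Min (f ` A) \<in> f ` A" using assms by simp
  then obtain a where "a \<in> A" "f a = Min (f ` A)" by auto
  then show ?thesis using assms by (metis Min_le finite_imageI imageI)
qed

definition P3 :: "(nat set \<Rightarrow> real) \<Rightarrow> nat set \<Rightarrow> nat \<Rightarrow> nat \<Rightarrow> nat \<Rightarrow> nat \<Rightarrow> bool" where
  "P3 \<pi> S p q r s \<longleftrightarrow> min (\<pi> (S \<union> {p,r}) + \<pi> (S \<union> {q,s})) (\<pi> (S \<union> {p,s}) + \<pi> (S \<union> {q,r}))
      \<le> \<pi> (S \<union> {p,q}) + \<pi> (S \<union> {r,s})"

lemma min_twice3:
  assumes "min_twice {1::nat,2,3} f"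
  shows "min (f 2) (f 3) \<le> f 1 \<and> min (f 1) (f 3) \<le> f 2 \<and> min (f 1) (f 2) \<le> f 3"
  using assms unfolding min_twice_def by (auto simp: min_def)

lemma P3_sorted:
  assumes D: "\<pi> \<in> dressian k n" and S: "S \<subseteq> {1..n}" "card S + 2 = k"
    and o: "a < b" "b < c" "c < d" and sub: "{a,b,c,d} \<subseteq> {1..n} - S"
  shows "P3 \<pi> S a b c d \<and> P3 \<pi> S a c b d \<and> P3 \<pi> S a d b c"
proof -
  let ?f = "(\<lambda>j. if j = 1 then \<pi> (S \<union> {a, b}) + \<pi> (S \<union> {c, d})
             else if j = 2 then \<pi> (S \<union> {a, c}) + \<pi> (S \<union> {b, d})
             else \<pi> (S \<union> {a, d}) + \<pi> (S \<union> {b, c}))"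
  have "min_twice {1::nat, 2, 3} ?f" using D S o sub unfolding dressian_def by blast
  from min_twice3[OF this] show ?thesis
    unfolding P3_def by (simp add: insert_commute)
qed

lemma P3_swap1: "P3 \<pi> S p q r s \<Longrightarrow> P3 \<pi> S q p r s"
  unfolding P3_def by (simp add: insert_commute min_def split: if_splits)
lemma P3_swap2: "P3 \<pi> S p q r s \<Longrightarrow> P3 \<pi> S p q s r"
  unfolding P3_def by (simp add: insert_commute min_def split: if_splits)
lemma P3_swap3: "P3 \<pi> S p q r s \<Longrightarrow> P3 \<pi> S r s p q"
  unfolding P3_def by (simp add: insert_commute min_def split: if_splits)

lemma P3_ord:
  assumes D: "\<pi> \<in> dressian k n" and S: "S \<subseteq> {1..n}" "card S + 2 = k"
    and o: "p < q" "r < s" "p < r" and ne: "q \<noteq> r" "q \<noteq> s"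
    and sub: "{p,q,r,s} \<subseteq> {1..n} - S"
  shows "P3 \<pi> S p q r s"
proof -
  consider "q < r" | "r < q \<and> q < s" | "s < q" using ne o by linarith
  then show ?thesis
  proof cases
    case 1 then show ?thesis using P3_sorted[OF D S, of p q r s] o sub by auto
  next
    case 2 then show ?thesis using P3_sorted[OF D S, of p r q s] o sub by auto
  next
    case 3 then show ?thesis using P3_sorted[OF D S, of p r s q] o sub by auto
  qed
qed

lemma P3_half:
  assumes D: "\<pi> \<in> dressian k n" and S: "S \<subseteq> {1..n}" "card S + 2 = k"
    and o: "p < q" "r < s" and ne: "p \<noteq> r" "q \<noteq> r" "q \<noteq> s" "p \<noteq> s"
    and sub: "{p,q,r,s} \<subseteq> {1..n} - S"
  shows "P3 \<pi> S p q r s"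
proof (cases "p < r")
  case True then show ?thesis using P3_ord[OF D S o] ne sub by auto
next
  case False
  then have "r < p" using ne by linarith
  then have "P3 \<pi> S r s p q" using P3_ord[OF D S, of r s p q] o ne sub by auto
  then show ?thesis by (rule P3_swap3)
qed

lemma P3_gen:
  assumes D: "\<pi> \<in> dressian k n" and S: "S \<subseteq> {1..n}" "card S + 2 = k"
    and ne: "p \<noteq> q" "r \<noteq> s" "p \<noteq> r" "q \<noteq> r" "q \<noteq> s" "p \<noteq> s"
    and sub: "{p,q,r,s} \<subseteq> {1..n} - S"
  shows "P3 \<pi> S p q r s"
proof -
  consider "p < q" "r < s" | "q < p" "r < s" | "p < q" "s < r" | "q < p" "s < r"
    using ne by linarith
  then show ?thesis
  proof cases
    case 1 then show ?thesis by (intro P3_half[OF D S]) (use ne sub in auto)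
  next
    case 2
    have "P3 \<pi> S q p r s" using 2 by (intro P3_half[OF D S]) (use ne sub in auto)
    then show ?thesis by (rule P3_swap1)
  next
    case 3
    have "P3 \<pi> S p q s r" using 3 by (intro P3_half[OF D S]) (use ne sub in auto)
    then show ?thesis by (rule P3_swap2)
  next
    case 4
    have "P3 \<pi> S q p s r" using 4 by (intro P3_half[OF D S]) (use ne sub in auto)
    then have "P3 \<pi> S p q s r" by (rule P3_swap1)
    then show ?thesis by (rule P3_swap2)
  qed
qed


lemma card_diff_sym:
  assumes "finite A" "finite B" "card A = card B"
  shows "card (B - A) = card (A - B)"
  using assms by (metis Int_commute card_Diff_subset_Int finite_Int)

lemma card_Suc_ne: "card A = Suc m \<Longrightarrow> A \<noteq> {}"
  by auto

lemma exch:
  assumes D: "\<pi> \<in> dressian k n" and B: "B \<in> binom n k"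
  shows "B' \<in> binom n k \<Longrightarrow> a \<in> B - B' \<Longrightarrow> card (B - B') = m \<Longrightarrow>
    \<exists>b\<in>B' - B. \<pi> (insert b (B - {a})) + \<pi> (insert a (B' - {b})) \<le> \<pi> B + \<pi> B'"
proof (induction m arbitrary: B')
  case 0
  have "finite B" using binomD[OF B] by auto
  then show ?case using 0 by auto
next
  case (Suc m)
  have fB: "finite B" and cB: "card B = k" and sB: "B \<subseteq> {1..n}" using binomD[OF B] by auto
  have fB': "finite B'" and cB': "card B' = k" and sB': "B' \<subseteq> {1..n}" using binomD[OF Suc.prems(1)] by auto
  have cR: "card (B' - B) = Suc m" using card_diff_sym[OF fB fB'] cB cB' Suc.prems by simp
  show ?case
  proof (cases "m = 0")
    case True
    have "card (B - B') = 1" using Suc.prems(3) True by simp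
    then obtain c where "B - B' = {c}" by (rule card_1_singletonE)
    then have h1: "B - B' = {a}" using Suc.prems(2) by auto
    have "card (B' - B) = 1" using cR True by simp
    then obtain b where h2: "B' - B = {b}" by (rule card_1_singletonE)
    have e1: "insert b (B - {a}) = B'" using h1 h2 by blast
    have e2: "insert a (B' - {b}) = B" using h1 h2 by blast
    show ?thesis using h2 e1 e2 by auto
  next
    case False
    have cm: "card (B - B' - {a}) = m" using Suc.prems by simp
    have "B - B' - {a} \<noteq> {}"
    proof
      assume h: "B - B' - {a} = {}"
      have "card (B - B' - {a}) = 0" unfolding h by simp
      then show False using cm False by linarith
    qed
    then obtain e where e: "e \<in> B" "e \<notin> B'" "e \<noteq> a" by auto
    have a: "a \<in> B" "a \<notin> B'" using Suc.prems by auto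
    show ?thesis
    proof (rule ccontr)
      assume "\<not> ?thesis"
      then have viol: "\<And>b. b \<in> B' - B \<Longrightarrow> \<pi> B + \<pi> B' < \<pi> (insert b (B - {a})) + \<pi> (insert a (B' - {b}))"
        by force
      define g where "g b = \<pi> (insert e (B' - {b})) + \<pi> (insert b (B - {a}))" for b
      have "B' - B \<noteq> {}" using card_Suc_ne[OF cR] .
      then obtain b0 where b0: "b0 \<in> B' - B" and b0min: "\<And>b. b \<in> B' - B \<Longrightarrow> g b0 \<le> g b"
        using fin_argmin[of "B' - B" g] fB' by auto
      define B1 where "B1 = insert e (B' - {b0})"
      have B1: "B1 \<in> binom n k" unfolding B1_def
        using binom_ex[OF Suc.prems(1), of b0 e] b0 e sB by auto
      have "B - B1 = B - B' - {e}" unfolding B1_def using b0 by auto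
      then have cB1: "card (B - B1) = m" using Suc.prems e by simp
      have aB1: "a \<in> B - B1" unfolding B1_def using a e by auto
      obtain d where d: "d \<in> B1 - B"
        and ih: "\<pi> (insert d (B - {a})) + \<pi> (insert a (B1 - {d})) \<le> \<pi> B + \<pi> B1"
        using Suc.IH[OF B1 aB1 cB1] by blast
      have dR: "d \<in> B' - B" "d \<noteq> b0" "d \<noteq> e" using d e unfolding B1_def by auto
      define S where "S = B' - {b0, d}"
      have "card {b0, d} = 2" using dR by simp
      moreover have "{b0, d} \<subseteq> B'" using b0 dR by auto
      ultimately have cS: "card S + 2 = k"
        unfolding S_def using cB' fB' card_Diff_subset[of "{b0,d}" B'] card_mono[of B' "{b0,d}"]
        by auto
      have sS: "S \<subseteq> {1..n}" unfolding S_def using sB' by auto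
      have sub: "{b0, d, a, e} \<subseteq> {1..n} - S" unfolding S_def using b0 dR a e sB sB' by auto
      have P: "P3 \<pi> S b0 d a e"
        by (rule P3_gen[OF D sS cS _ _ _ _ _ _ sub]) (use b0 dR a e in auto)
      have q1: "S \<union> {b0, d} = B'" unfolding S_def using b0 dR a e by auto
      have q2: "S \<union> {a, e} = insert a (B1 - {d})" unfolding S_def B1_def using b0 dR a e by auto
      have q3: "S \<union> {d, e} = B1" unfolding S_def B1_def using b0 dR a e by auto
      have q4: "S \<union> {b0, a} = insert a (B' - {d})" unfolding S_def using b0 dR a e by auto
      have q5: "S \<union> {b0, e} = insert e (B' - {d})" unfolding S_def using b0 dR a e by auto
      have q6: "S \<union> {d, a} = insert a (B' - {b0})" unfolding S_def using b0 dR a e by auto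
      have P': "min (\<pi> (insert a (B' - {d})) + \<pi> B1) (\<pi> (insert e (B' - {d})) + \<pi> (insert a (B' - {b0})))
          \<le> \<pi> B' + \<pi> (insert a (B1 - {d}))"
        using P unfolding P3_def q1 q2 q3 q4 q5 q6 .
      have vd: "\<pi> B + \<pi> B' < \<pi> (insert d (B - {a})) + \<pi> (insert a (B' - {d}))" using viol dR by auto
      have vb: "\<pi> B + \<pi> B' < \<pi> (insert b0 (B - {a})) + \<pi> (insert a (B' - {b0}))" using viol b0 by auto
      have gm: "g b0 \<le> g d" using b0min dR by auto
      then have gm': "\<pi> B1 + \<pi> (insert b0 (B - {a})) \<le> \<pi> (insert e (B' - {d})) + \<pi> (insert d (B - {a}))"
        unfolding g_def B1_def .
      show False using P' vd vb gm' ih unfolding min_le_iff_disj by linarith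
    qed
  qed
qed

lemma exch_tw:
  assumes D: "\<pi> \<in> dressian k n" and B: "B \<in> binom n k" and B': "B' \<in> binom n k" and a: "a \<in> B - B'"
  shows "\<exists>b\<in>B' - B. twist \<pi> x (insert b (B - {a})) + twist \<pi> x (insert a (B' - {b}))
           \<le> twist \<pi> x B + twist \<pi> x B'"
proof -
  obtain b where b: "b \<in> B' - B" and le: "\<pi> (insert b (B - {a})) + \<pi> (insert a (B' - {b})) \<le> \<pi> B + \<pi> B'"
    using exch[OF D B B' a] by blast
  have fB: "finite B" "finite B'" using binomD[OF B] binomD[OF B'] by auto
  have "twist \<pi> x (insert b (B - {a})) = \<pi> (insert b (B - {a})) - sum x B + x a - x b"
    using twist_ex[OF fB(1), of a b] a b by auto
  moreover have "twist \<pi> x (insert a (B' - {b})) = \<pi> (insert a (B' - {b})) - sum x B' + x b - x a"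
    using twist_ex[OF fB(2), of b a] a b by auto
  ultimately show ?thesis using b le unfolding twist_def by force
qed

lemma loc_glob:
  assumes D: "\<pi> \<in> dressian k n" and I: "I \<in> binom n k"
    and loc: "\<forall>i\<in>I. \<forall>j\<in>{1..n} - I. twist \<pi> x I \<le> twist \<pi> x (insert j (I - {i}))"
  shows "J \<in> binom n k \<Longrightarrow> card (J - I) = m \<Longrightarrow> twist \<pi> x I \<le> twist \<pi> x J"
proof (induction m arbitrary: J)
  case 0
  have "finite J" "finite I" "card J = card I" "J - I = {}" using binomD[OF I] binomD[OF 0(1)] 0 by auto
  then have "J = I" by (metis Diff_eq_empty_iff card_subset_eq)
  then show ?case by simp
next
  case (Suc m)
  have fJ: "finite J" and sI: "I \<subseteq> {1..n}" using binomD[OF I] binomD[OF Suc.prems(1)] by auto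
  obtain a where a: "a \<in> J - I" using Suc.prems by (metis card.empty ex_in_conv nat.simps(3))
  obtain b where b: "b \<in> I - J" and le: "twist \<pi> x (insert b (J - {a})) + twist \<pi> x (insert a (I - {b}))
           \<le> twist \<pi> x J + twist \<pi> x I"
    using exch_tw[OF D Suc.prems(1) I a] by blast
  have J': "insert b (J - {a}) \<in> binom n k" using binom_ex[OF Suc.prems(1), of a b] a b sI by auto
  have "insert b (J - {a}) - I = J - I - {a}" using b by auto
  then have "card (insert b (J - {a}) - I) = m" using Suc.prems a fJ by simp
  then have "twist \<pi> x I \<le> twist \<pi> x (insert b (J - {a}))" using Suc.IH J' by blast
  moreover have "twist \<pi> x I \<le> twist \<pi> x (insert a (I - {b}))" using loc a b binomD[OF Suc.prems(1)] by auto
  ultimately show ?case using le by linarith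
qed

lemma in_L:
  assumes D: "\<pi> \<in> dressian k n"
    and cover: "\<forall>e\<in>{1..n}. \<exists>B\<in>binom n k. e \<in> B \<and> (\<forall>J\<in>binom n k. twist \<pi> y B \<le> twist \<pi> y J)"
  shows "y \<in> trop_lin_space n k \<pi>"
  unfolding trop_lin_space_def
proof (intro CollectI ballI)
  fix \<tau> assume t: "\<tau> \<in> binom n (k + 1)"
  have ft: "finite \<tau>" and ct: "card \<tau> = k + 1" and st: "\<tau> \<subseteq> {1..n}" using binomD[OF t] by auto
  define f where "f i = \<pi> (\<tau> - {i}) + y i" for i
  have "\<tau> \<noteq> {}" using ct by auto
  then obtain a where a: "a \<in> \<tau>" and amin: "\<And>i. i \<in> \<tau> \<Longrightarrow> f a \<le> f i"
    using fin_argmin[OF ft, of f] by auto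
  define B where "B = \<tau> - {a}"
  have Bb: "B \<in> binom n k" unfolding B_def binom_def using st ct a ft by auto
  obtain B' where B': "B' \<in> binom n k" "a \<in> B'" and gl: "\<forall>J\<in>binom n k. twist \<pi> y B' \<le> twist \<pi> y J"
    using cover a st by blast
  have aB: "a \<in> B' - B" unfolding B_def using B' by auto
  obtain j where j: "j \<in> B - B'" and le: "twist \<pi> y (insert j (B' - {a})) + twist \<pi> y (insert a (B - {j}))
           \<le> twist \<pi> y B' + twist \<pi> y B"
    using exch_tw[OF D B'(1) Bb aB] by blast
  have "insert j (B' - {a}) \<in> binom n k" using binom_ex[OF B'(1) B'(2), of j] j st unfolding B_def by auto
  then have "twist \<pi> y B' \<le> twist \<pi> y (insert j (B' - {a}))" using gl by auto
  then have le2: "twist \<pi> y (insert a (B - {j})) \<le> twist \<pi> y B" using le by linarith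
  have jt: "j \<in> \<tau>" "j \<noteq> a" using j unfolding B_def by auto
  have "insert a (B - {j}) = \<tau> - {j}" unfolding B_def using a jt by auto
  moreover have "\<And>i. i \<in> \<tau> \<Longrightarrow> twist \<pi> y (\<tau> - {i}) = f i - sum y \<tau>"
    unfolding twist_def f_def using ft by (simp add: sum_diff1)
  ultimately have "f j \<le> f a" using le2 a jt unfolding B_def by auto
  then show "min_twice \<tau> (\<lambda>i. \<pi> (\<tau> - {i}) + y i)"
  proof -
    have "f j = f a" using \<open>f j \<le> f a\<close> amin jt by (simp add: order_antisym)
    then have "a \<in> \<tau> \<and> j \<in> \<tau> \<and> a \<noteq> j \<and> (\<forall>l\<in>\<tau>. f a \<le> f l) \<and> f j = f a"
      using a jt amin by auto
    then show ?thesis unfolding min_twice_def f_def by blast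
  qed
qed


definition sl :: "(nat set \<Rightarrow> real) \<Rightarrow> nat set \<Rightarrow> (nat \<Rightarrow> real) \<Rightarrow> nat \<Rightarrow> nat \<Rightarrow> real" where
  "sl \<pi> I x i j = \<pi> (insert j (I - {i})) - \<pi> I - x j + x i"

definition feas :: "nat \<Rightarrow> (nat set \<Rightarrow> real) \<Rightarrow> nat set \<Rightarrow> (nat \<Rightarrow> real) \<Rightarrow> bool" where
  "feas n \<pi> I x \<longleftrightarrow> (\<forall>i\<in>I. \<forall>j\<in>{1..n} - I. 0 \<le> sl \<pi> I x i j)"

definition tight :: "nat \<Rightarrow> (nat set \<Rightarrow> real) \<Rightarrow> nat set \<Rightarrow> (nat \<Rightarrow> real) \<Rightarrow> (nat \<times> nat) set" where
  "tight n \<pi> I x = {p \<in> I \<times> ({1..n} - I). sl \<pi> I x (fst p) (snd p) = 0}"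

lemma tw_sl:
  assumes "finite I" "i \<in> I" "j \<notin> I"
  shows "twist \<pi> x (insert j (I - {i})) = twist \<pi> x I + sl \<pi> I x i j"
proof -
  have h: "twist \<pi> x (insert j (I - {i})) = \<pi> (insert j (I - {i})) - sum x I + x i - x j"
    using twist_ex assms by blast
  show ?thesis unfolding h by (simp add: sl_def twist_def)
qed

lemma exists_feas:
  assumes "finite I"
  shows "\<exists>x. feas n \<pi> I x"
proof -
  define K where "K = (\<Sum>p\<in>I \<times> {1..n}. \<bar>\<pi> (insert (snd p) (I - {fst p})) - \<pi> I\<bar>)"
  define x where "x v = (if v \<in> I then 0 else - K)" for v :: nat
  have "feas n \<pi> I x" unfolding feas_def
  proof (intro ballI)
    fix i j assume i: "i \<in> I" and j: "j \<in> {1..n} - I"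
    have "\<bar>\<pi> (insert j (I - {i})) - \<pi> I\<bar> \<le> K"
      unfolding K_def using member_le_sum[of "(i,j)" "I \<times> {1..n}" "\<lambda>p. \<bar>\<pi> (insert (snd p) (I - {fst p})) - \<pi> I\<bar>"]
        i j assms by auto
    then show "0 \<le> sl \<pi> I x i j" unfolding sl_def x_def using i j by auto
  qed
  then show ?thesis by blast
qed

lemma tight_sub: "tight n \<pi> I x \<subseteq> I \<times> ({1..n} - I)"
  unfolding tight_def by auto

lemma exists_max:
  assumes "finite I"
  shows "\<exists>x. feas n \<pi> I x \<and> (\<forall>x'. feas n \<pi> I x' \<longrightarrow> card (tight n \<pi> I x') \<le> card (tight n \<pi> I x))"
proof -
  define A where "A = (\<lambda>x. card (tight n \<pi> I x)) ` {x. feas n \<pi> I x}"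
  have fin: "finite (I \<times> ({1..n} - I))" using assms by auto
  have "A \<subseteq> {..card (I \<times> ({1..n} - I))}"
    unfolding A_def using card_mono[OF fin tight_sub] by auto
  then have fA: "finite A" by (rule finite_subset) auto
  have "A \<noteq> {}" unfolding A_def using exists_feas[OF assms] by auto
  then have "Max A \<in> A" using fA by simp
  then obtain x where x: "feas n \<pi> I x" "card (tight n \<pi> I x) = Max A" unfolding A_def by auto
  have "\<forall>x'. feas n \<pi> I x' \<longrightarrow> card (tight n \<pi> I x') \<le> card (tight n \<pi> I x)"
    using x fA unfolding A_def by auto
  then show ?thesis using x by blast
qed

lemma connected:
  assumes I: "I \<in> binom n k" and k: "0 < k" "k < n" and fx: "feas n \<pi> I x"
    and mx: "\<forall>x'. feas n \<pi> I x' \<longrightarrow> card (tight n \<pi> I x') \<le> card (tight n \<pi> I x)"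
    and C: "C \<subseteq> {1..n}" "C \<noteq> {}" "C \<noteq> {1..n}"
  shows "\<exists>p\<in>tight n \<pi> I x. (fst p \<in> C) \<noteq> (snd p \<in> C)"
proof (rule ccontr)
  assume "\<not> ?thesis"
  then have nc: "\<And>p. p \<in> tight n \<pi> I x \<Longrightarrow> (fst p \<in> C) = (snd p \<in> C)" by blast
  have fI: "finite I" and cI: "card I = k" and sI: "I \<subseteq> {1..n}" using binomD[OF I] by auto
  have Ine: "I \<noteq> {}" using cI k by auto
  have EIne: "{1..n} - I \<noteq> {}"
  proof
    assume "{1..n} - I = {}"
    then have "{1..n} \<subseteq> I" by auto
    then have "card {1..n} \<le> card I" using fI card_mono by blast
    then show False using cI k by simp
  qed
  define X where "X = {p \<in> I \<times> ({1..n} - I). (fst p \<in> C) \<noteq> (snd p \<in> C)}"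
  have fX: "finite X" unfolding X_def using fI by auto
  have Xne: "X \<noteq> {}"
  proof -
    obtain i0 where i0: "i0 \<in> I" using Ine by auto
    obtain j0 where j0: "j0 \<in> {1..n} - I" using EIne by blast
    obtain c0 where c0: "c0 \<in> C" using C by auto
    obtain u where u: "u \<in> {1..n} - C" using C by blast
    show ?thesis
    proof (cases "(i0 \<in> C) = (j0 \<in> C)")
      case False then show ?thesis unfolding X_def using i0 j0 by auto
    next
      case True
      show ?thesis
      proof (cases "i0 \<in> C")
        case True
        then have "j0 \<in> C" using \<open>(i0 \<in> C) = (j0 \<in> C)\<close> by simp
        show ?thesis
        proof (cases "u \<in> I")
          case True then have "(u, j0) \<in> X" unfolding X_def using u j0 \<open>j0 \<in> C\<close> by auto
          then show ?thesis by auto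
        next
          case False then have "(i0, u) \<in> X" unfolding X_def using u i0 \<open>i0 \<in> C\<close> by auto
          then show ?thesis by auto
        qed
      next
        case False
        then have "j0 \<notin> C" using \<open>(i0 \<in> C) = (j0 \<in> C)\<close> by simp
        show ?thesis
        proof (cases "c0 \<in> I")
          case True then have "(c0, j0) \<in> X" unfolding X_def using c0 j0 \<open>j0 \<notin> C\<close> by auto
          then show ?thesis by auto
        next
          case False then have "(i0, c0) \<in> X" unfolding X_def using c0 i0 \<open>i0 \<notin> C\<close> C by auto
          then show ?thesis by auto
        qed
      qed
    qed
  qed
  define s where "s p = sl \<pi> I x (fst p) (snd p)" for p
  have spos: "\<And>p. p \<in> X \<Longrightarrow> 0 < s p"
  proof -
    fix p assume p: "p \<in> X"
    then have "p \<notin> tight n \<pi> I x" using nc unfolding X_def by auto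
    then have "s p \<noteq> 0" using p unfolding X_def tight_def s_def by auto
    moreover have "0 \<le> s p" using fx p unfolding X_def feas_def s_def by auto
    ultimately show "0 < s p" by simp
  qed
  obtain p0 where p0: "p0 \<in> X" and p0min: "\<And>p. p \<in> X \<Longrightarrow> s p0 \<le> s p"
    using fin_argmin[OF fX Xne, of s] by auto
  define t where "t = (if snd p0 \<in> C then s p0 else - s p0)"
  define x' where "x' v = x v + (if v \<in> C then t else 0)" for v
  have slx': "\<And>i j. sl \<pi> I x' i j = sl \<pi> I x i j - (if j \<in> C then t else 0) + (if i \<in> C then t else 0)"
    unfolding sl_def x'_def by simp
  have sp0: "0 < s p0" using spos p0 by auto
  have fx': "feas n \<pi> I x'" unfolding feas_def
  proof (intro ballI)
    fix i j assume i: "i \<in> I" and j: "j \<in> {1..n} - I"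
    have nn: "0 \<le> sl \<pi> I x i j" using fx i j unfolding feas_def by auto
    show "0 \<le> sl \<pi> I x' i j"
    proof (cases "(i \<in> C) = (j \<in> C)")
      case True then show ?thesis using nn slx'[of i j] by auto
    next
      case False
      then have "(i, j) \<in> X" unfolding X_def using i j by auto
      then have "s p0 \<le> sl \<pi> I x i j" using p0min unfolding s_def by force
      moreover have "\<bar>t\<bar> = s p0" unfolding t_def using sp0 by auto
      ultimately show ?thesis using False slx'[of i j] by (auto split: if_splits)
    qed
  qed
  have sub: "tight n \<pi> I x \<subseteq> tight n \<pi> I x'"
  proof
    fix p assume p: "p \<in> tight n \<pi> I x"
    then have "(fst p \<in> C) = (snd p \<in> C)" using nc by auto
    then show "p \<in> tight n \<pi> I x'" using p slx'[of "fst p" "snd p"] unfolding tight_def by auto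
  qed
  have p0in: "p0 \<in> tight n \<pi> I x'"
  proof -
    have "(fst p0 \<in> C) \<noteq> (snd p0 \<in> C)" using p0 unfolding X_def by auto
    then have "sl \<pi> I x' (fst p0) (snd p0) = 0"
      using slx'[of "fst p0" "snd p0"] unfolding t_def s_def by auto
    then show ?thesis using p0 unfolding tight_def X_def by auto
  qed
  have p0out: "p0 \<notin> tight n \<pi> I x" using sp0 unfolding tight_def s_def by auto
  have "tight n \<pi> I x \<subset> tight n \<pi> I x'" using sub p0in p0out by auto
  moreover have "finite (tight n \<pi> I x')" by (rule finite_subset[OF tight_sub]) (use fI in auto)
  ultimately have "card (tight n \<pi> I x) < card (tight n \<pi> I x')" by (rule psubset_card_mono[rotated])
  then show False using mx fx' by fastforce
qed

lemma lift_props: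
  assumes "is_lift n k \<pi> y" "binom n k \<noteq> {}"
  shows "\<forall>J\<in>binom n k. 0 \<le> twist \<pi> y J" "\<exists>J\<in>binom n k. twist \<pi> y J = 0"
proof -
  have f: "finite (twist \<pi> y ` binom n k)" using binom_finite by simp
  have m: "Min (twist \<pi> y ` binom n k) = 0" using assms unfolding is_lift_def by auto
  show "\<forall>J\<in>binom n k. 0 \<le> twist \<pi> y J" using Min_le[OF f] m by auto
  have "Min (twist \<pi> y ` binom n k) \<in> twist \<pi> y ` binom n k" using f assms(2) by simp
  then show "\<exists>J\<in>binom n k. twist \<pi> y J = 0" using m by auto
qed

lemma lift_unique:
  assumes k: "0 < k" and ne: "binom n k \<noteq> {}" and l1: "is_lift n k \<pi> y1" and l2: "is_lift n k \<pi> y2"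
    and pe: "proj_eq n y1 y2"
  shows "y1 = y2"
proof -
  obtain c where c: "\<forall>i\<in>{1..n}. y1 i = y2 i + c" using pe unfolding proj_eq_def by auto
  have sh: "\<And>J. J \<in> binom n k \<Longrightarrow> twist \<pi> y1 J = twist \<pi> y2 J - real k * c"
  proof -
    fix J assume J: "J \<in> binom n k"
    have "sum y1 J = sum (\<lambda>i. y2 i + c) J" using c binomD[OF J] by (intro sum.cong) auto
    also have "\<dots> = sum y2 J + real k * c" using binomD[OF J] by (simp add: sum.distrib)
    finally show "twist \<pi> y1 J = twist \<pi> y2 J - real k * c" unfolding twist_def by simp
  qed
  obtain J1 where J1: "J1 \<in> binom n k" "twist \<pi> y1 J1 = 0" using lift_props[OF l1 ne] by auto
  obtain J2 where J2: "J2 \<in> binom n k" "twist \<pi> y2 J2 = 0" using lift_props[OF l2 ne] by auto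
  have "0 \<le> twist \<pi> y2 J1" "0 \<le> twist \<pi> y1 J2" using lift_props[OF l1 ne] lift_props[OF l2 ne] J1 J2 by auto
  then have "real k * c = 0" using sh[OF J1(1)] sh[OF J2(1)] J1 J2 by linarith
  then have c0: "c = 0" using k by simp
  show ?thesis
  proof
    fix v show "y1 v = y2 v"
      using c c0 l1 l2 unfolding is_lift_def by (cases "v \<in> {1..n}") auto
  qed
qed


theorem proposition2p4:
  fixes n k :: nat and \<pi> :: "nat set \<Rightarrow> real" and I :: "nat set"
  assumes "0 < k" and "k < n"
    and "\<pi> \<in> dressian k n"
    and "I \<in> binom n k"
  shows "\<pi> I = - Min ((\<lambda>y. \<Sum>i\<in>I. - y i) ` vertex_lifts n k \<pi>)"
proof -
  note k = assms(1,2) and D = assms(3) and I = assms(4)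
  have fI: "finite I" and cI: "card I = k" and sI: "I \<subseteq> {1..n}" using binomD[OF I] by auto
  have bne: "binom n k \<noteq> {}" using I by auto
  obtain x where fx: "feas n \<pi> I x"
    and mx: "\<forall>x'. feas n \<pi> I x' \<longrightarrow> card (tight n \<pi> I x') \<le> card (tight n \<pi> I x)"
    using exists_max[OF fI] by blast
  have conn: "\<And>C. C \<subseteq> {1..n} \<Longrightarrow> C \<noteq> {} \<Longrightarrow> C \<noteq> {1..n} \<Longrightarrow>
      \<exists>p\<in>tight n \<pi> I x. (fst p \<in> C) \<noteq> (snd p \<in> C)"
    using connected[OF I k fx mx] by blast
  define m where "m = twist \<pi> x I"
  define y where "y v = (if v \<in> {1..n} then x v + m / real k else 0)" for v
  have twy: "\<And>J. J \<in> binom n k \<Longrightarrow> twist \<pi> y J = twist \<pi> x J - m"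
  proof -
    fix J assume J: "J \<in> binom n k"
    have "sum y J = sum (\<lambda>v. x v + m / real k) J" unfolding y_def using binomD[OF J]
      by (intro sum.cong) auto
    also have "\<dots> = sum x J + m" using binomD[OF J] k by (simp add: sum.distrib)
    finally show "twist \<pi> y J = twist \<pi> x J - m" unfolding twist_def by simp
  qed
  have sly: "\<And>i j. i \<in> {1..n} \<Longrightarrow> j \<in> {1..n} \<Longrightarrow> sl \<pi> I y i j = sl \<pi> I x i j"
    unfolding sl_def y_def by simp
  have loc: "\<forall>i\<in>I. \<forall>j\<in>{1..n} - I. twist \<pi> y I \<le> twist \<pi> y (insert j (I - {i}))"
  proof (intro ballI)
    fix i j assume i: "i \<in> I" and j: "j \<in> {1..n} - I"
    have "0 \<le> sl \<pi> I x i j" using fx i j unfolding feas_def by auto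
    then show "twist \<pi> y I \<le> twist \<pi> y (insert j (I - {i}))"
      using tw_sl[OF fI i, of j \<pi> y] sly[of i j] i j sI by auto
  qed
  have glob: "\<And>J. J \<in> binom n k \<Longrightarrow> twist \<pi> y I \<le> twist \<pi> y J"
    using loc_glob[OF D I loc] by blast
  have ty0: "twist \<pi> y I = 0" using twy[OF I] unfolding m_def by simp
  have tightB: "\<And>p. p \<in> tight n \<pi> I x \<Longrightarrow>
      insert (snd p) (I - {fst p}) \<in> binom n k \<and> twist \<pi> y (insert (snd p) (I - {fst p})) = twist \<pi> y I"
  proof -
    fix p assume p: "p \<in> tight n \<pi> I x"
    then have p1: "fst p \<in> I" "snd p \<in> {1..n} - I" "sl \<pi> I x (fst p) (snd p) = 0"
      unfolding tight_def by auto
    have "insert (snd p) (I - {fst p}) \<in> binom n k" using binom_ex[OF I p1(1)] p1 by auto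
    moreover have "twist \<pi> y (insert (snd p) (I - {fst p})) = twist \<pi> y I"
      using tw_sl[OF fI p1(1), of "snd p" \<pi> y] sly[of "fst p" "snd p"] p1 sI by auto
    ultimately show "?thesis p" by blast
  qed
  have cover: "\<forall>e\<in>{1..n}. \<exists>B\<in>binom n k. e \<in> B \<and> (\<forall>J\<in>binom n k. twist \<pi> y B \<le> twist \<pi> y J)"
  proof
    fix e assume e: "e \<in> {1..n}"
    show "\<exists>B\<in>binom n k. e \<in> B \<and> (\<forall>J\<in>binom n k. twist \<pi> y B \<le> twist \<pi> y J)"
    proof (cases "e \<in> I")
      case True then show ?thesis using I glob by blast
    next
      case False
      have "{e} \<noteq> {1..n}"
      proof
        assume "{e} = {1..n}"
        then have "I \<subseteq> {e}" using sI by simp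
        then have "I = {}" using False by auto
        then show False using cI k by simp
      qed
      then obtain p where p: "p \<in> tight n \<pi> I x" "(fst p \<in> {e}) \<noteq> (snd p \<in> {e})"
        using conn[of "{e}"] e by auto
      have "fst p \<in> I" using p unfolding tight_def by auto
      then have "snd p = e" using p False by auto
      have "insert (snd p) (I - {fst p}) \<in> binom n k \<and> snd p \<in> insert (snd p) (I - {fst p}) \<and>
          (\<forall>J\<in>binom n k. twist \<pi> y (insert (snd p) (I - {fst p})) \<le> twist \<pi> y J)"
        using tightB[OF p(1)] glob by auto
      then show ?thesis using \<open>snd p = e\<close> by blast
    qed
  qed
  have yL: "y \<in> trop_lin_space n k \<pi>" by (rule in_L[OF D cover])
  have lifty: "is_lift n k \<pi> y" unfolding is_lift_def
  proof
    show "\<forall>i. i \<notin> {1..n} \<longrightarrow> y i = 0" unfolding y_def by auto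
    show "Min (twist \<pi> y ` binom n k) = 0"
    proof (rule Min_eqI)
      show "finite (twist \<pi> y ` binom n k)" using binom_finite by simp
      show "\<And>z. z \<in> twist \<pi> y ` binom n k \<Longrightarrow> 0 \<le> z" using glob ty0 by auto
      show "0 \<in> twist \<pi> y ` binom n k" by (rule image_eqI[of _ _ I]) (use ty0 I in auto)
    qed
  qed
  have MI: "I \<in> min_matroid n k \<pi> y" unfolding min_matroid_def using I glob by auto
  have verty: "is_vertex n k \<pi> y" unfolding is_vertex_def
  proof (intro conjI ballI impI)
    show "y \<in> trop_lin_space n k \<pi>" by (rule yL)
    fix y' assume y'L: "y' \<in> trop_lin_space n k \<pi>" and Meq: "min_matroid n k \<pi> y' = min_matroid n k \<pi> y"
    have gl': "\<And>J. J \<in> binom n k \<Longrightarrow> twist \<pi> y' I \<le> twist \<pi> y' J"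
      using MI Meq unfolding min_matroid_def by auto
    have edge: "\<And>p. p \<in> tight n \<pi> I x \<Longrightarrow> y' (fst p) - y (fst p) = y' (snd p) - y (snd p)"
    proof -
      fix p assume p: "p \<in> tight n \<pi> I x"
      then have p1: "fst p \<in> I" "snd p \<in> {1..n} - I" unfolding tight_def by auto
      define B where "B = insert (snd p) (I - {fst p})"
      have B: "B \<in> binom n k" "twist \<pi> y B = twist \<pi> y I" using tightB[OF p] unfolding B_def by auto
      have "B \<in> min_matroid n k \<pi> y" unfolding min_matroid_def using B glob by auto
      then have "B \<in> min_matroid n k \<pi> y'" using Meq by simp
      then have "twist \<pi> y' B \<le> twist \<pi> y' I" using I unfolding min_matroid_def by auto
      moreover have "twist \<pi> y' I \<le> twist \<pi> y' B" using gl' B by auto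
      ultimately have "twist \<pi> y' B = twist \<pi> y' I" by simp
      then have "sl \<pi> I y' (fst p) (snd p) = 0" using tw_sl[OF fI p1(1), of "snd p" \<pi> y'] p1
        unfolding B_def by auto
      moreover have "sl \<pi> I y (fst p) (snd p) = 0" using B tw_sl[OF fI p1(1), of "snd p" \<pi> y] p1
        unfolding B_def by auto
      ultimately show "y' (fst p) - y (fst p) = y' (snd p) - y (snd p)" unfolding sl_def by linarith
    qed
    obtain r where r: "r \<in> I" using cI k by fastforce
    define C where "C = {v \<in> {1..n}. y' v - y v = y' r - y r}"
    have "C = {1..n}"
    proof (rule ccontr)
      assume "C \<noteq> {1..n}"
      moreover have "C \<subseteq> {1..n}" unfolding C_def by auto
      moreover have "r \<in> C" unfolding C_def using r sI by auto
      then have "C \<noteq> {}" by auto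
      ultimately obtain p where p: "p \<in> tight n \<pi> I x" "(fst p \<in> C) \<noteq> (snd p \<in> C)"
        using conn by blast
      have "fst p \<in> {1..n}" "snd p \<in> {1..n}" using p(1) sI unfolding tight_def by auto
      then show False using p edge[OF p(1)] unfolding C_def by auto
    qed
    then have "\<forall>i\<in>{1..n}. i \<in> C" by simp
    then have "\<forall>i\<in>{1..n}. y' i = y i + (y' r - y r)" unfolding C_def by auto
    then show "proj_eq n y' y" unfolding proj_eq_def by blast
  qed
  have yV: "y \<in> vertex_lifts n k \<pi>" unfolding vertex_lifts_def using verty lifty by auto
  have val: "(\<Sum>i\<in>I. - y i) = - \<pi> I" using ty0 unfolding twist_def by (simp add: sum_negf)
  have lower: "\<And>z. z \<in> vertex_lifts n k \<pi> \<Longrightarrow> - \<pi> I \<le> (\<Sum>i\<in>I. - z i)"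
  proof -
    fix z assume "z \<in> vertex_lifts n k \<pi>"
    then have "is_lift n k \<pi> z" unfolding vertex_lifts_def by auto
    then have "0 \<le> twist \<pi> z I" using lift_props(1)[OF _ bne] I by blast
    then show "- \<pi> I \<le> (\<Sum>i\<in>I. - z i)" unfolding twist_def by (simp add: sum_negf)
  qed
  have inj: "inj_on (min_matroid n k \<pi>) (vertex_lifts n k \<pi>)"
  proof (rule inj_onI)
    fix y1 y2 assume y1: "y1 \<in> vertex_lifts n k \<pi>" and y2: "y2 \<in> vertex_lifts n k \<pi>"
      and eq: "min_matroid n k \<pi> y1 = min_matroid n k \<pi> y2"
    have "proj_eq n y2 y1" using y1 y2 eq unfolding vertex_lifts_def is_vertex_def by auto
    then have "y2 = y1" using lift_unique[OF k(1) bne] y1 y2 unfolding vertex_lifts_def by auto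
    then show "y1 = y2" by simp
  qed
  have "min_matroid n k \<pi> ` vertex_lifts n k \<pi> \<subseteq> Pow (binom n k)"
    unfolding min_matroid_def by auto
  then have "finite (min_matroid n k \<pi> ` vertex_lifts n k \<pi>)"
    using binom_finite finite_subset by blast
  then have finV: "finite (vertex_lifts n k \<pi>)" using finite_imageD inj by blast
  have "Min ((\<lambda>y. \<Sum>i\<in>I. - y i) ` vertex_lifts n k \<pi>) = - \<pi> I"
  proof (rule Min_eqI)
    show "finite ((\<lambda>y. \<Sum>i\<in>I. - y i) ` vertex_lifts n k \<pi>)" using finV by simp
    show "\<And>z. z \<in> (\<lambda>y. \<Sum>i\<in>I. - y i) ` vertex_lifts n k \<pi> \<Longrightarrow> - \<pi> I \<le> z" using lower by auto
    show "- \<pi> I \<in> (\<lambda>y. \<Sum>i\<in>I. - y i) ` vertex_lifts n k \<pi>"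
      by (rule image_eqI[of _ _ y]) (use val yV in auto)
  qed
  then show ?thesis by linarith
qed

end
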